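(* Let $F:\mathcal{P}(V,A)\to S_2(A)$ be a weakly viable, reducible consular election rule satisfying SPP and SPO. Then the range graph $\mathcal{G}(F)$ is a complete bipartite graph.
   Context: $V$ is a finite nonempty set of voters, $A$ a finite set of alternatives; a profile $P$ assigns to each voter $i$ a linear order $P_i$ on $A$; $P_i'P_{-i}$ replaces voter $i$'s order by $P_i'$; $P|_B$ is the profile of restrictions to $B\subseteq A$. $S_2(A)$ is the set of 2-element subsets of $A$; a consular election rule is a map $F:\mathcal{P}(V,A)\to S_2(A)$. SPO: for all $P$, $i$, $P_i'$, $\mathrm{best}(P_i,F(P))\succeq_i\mathrm{best}(P_i,F(P_i'P_{-i}))$; SPP: same with $\mathrm{worst}$, where $\mathrm{best}(P_i,W)$, $\mathrm{worst}(P_i,W)$ are the $P_i$-best and $P_i$-worst elements of $W$. Weakly viable: every $a\in A$ lies in $F(P)$ for some $P$. $F$ is reducible if there is a partition $A=B\uplus C$ and social choice functions $G:\mathcal{P}(V,B)\to B$, $H:\mathcal{P}(V,C)\to C$ with $F(P)=\{G(P|_B),H(P|_C)\}$ for all $P$. The range graph $\mathcal{G}(F)$ has vertex set $A$ and edge set equal to the range of $F$. *)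

theory Defs
  imports Main
begin

text \<open>A ballot is a relation r on alternatives; (x,y) \<in> r means the voter weakly
prefers x to y (x is ranked at least as high as y). A profile on alternative set A
assigns to each voter in V a linear order on A, and the empty relation to non-voters
(so that profiles are determined by the ballots of the voters in V).\<close>

definition profile :: "'v set \<Rightarrow> 'a set \<Rightarrow> ('v \<Rightarrow> 'a rel) \<Rightarrow> bool" where
  "profile V A P \<longleftrightarrow> (\<forall>i\<in>V. linear_order_on A (P i)) \<and> (\<forall>i. i \<notin> V \<longrightarrow> P i = {})"

definition restrict_profile :: "('v \<Rightarrow> 'a rel) \<Rightarrow> 'a set \<Rightarrow> ('v \<Rightarrow> 'a rel)" where
  "restrict_profile P B = (\<lambda>i. P i \<inter> (B \<times> B))"

definition S2 :: "'a set \<Rightarrow> 'a set set" where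
  "S2 A = {W. W \<subseteq> A \<and> card W = 2}"

definition best :: "'a rel \<Rightarrow> 'a set \<Rightarrow> 'a" where
  "best r W = (THE x. x \<in> W \<and> (\<forall>y\<in>W. (x, y) \<in> r))"

definition worst :: "'a rel \<Rightarrow> 'a set \<Rightarrow> 'a" where
  "worst r W = (THE x. x \<in> W \<and> (\<forall>y\<in>W. (y, x) \<in> r))"

definition consular_rule :: "'v set \<Rightarrow> 'a set \<Rightarrow> (('v \<Rightarrow> 'a rel) \<Rightarrow> 'a set) \<Rightarrow> bool" where
  "consular_rule V A F \<longleftrightarrow> (\<forall>P. profile V A P \<longrightarrow> F P \<in> S2 A)"

definition SPO :: "'v set \<Rightarrow> 'a set \<Rightarrow> (('v \<Rightarrow> 'a rel) \<Rightarrow> 'a set) \<Rightarrow> bool" where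
  "SPO V A F \<longleftrightarrow> (\<forall>P i Pi'. profile V A P \<longrightarrow> i \<in> V \<longrightarrow> linear_order_on A Pi' \<longrightarrow>
      (best (P i) (F P), best (P i) (F (P(i := Pi')))) \<in> P i)"

definition SPP :: "'v set \<Rightarrow> 'a set \<Rightarrow> (('v \<Rightarrow> 'a rel) \<Rightarrow> 'a set) \<Rightarrow> bool" where
  "SPP V A F \<longleftrightarrow> (\<forall>P i Pi'. profile V A P \<longrightarrow> i \<in> V \<longrightarrow> linear_order_on A Pi' \<longrightarrow>
      (worst (P i) (F P), worst (P i) (F (P(i := Pi')))) \<in> P i)"

definition weakly_viable :: "'v set \<Rightarrow> 'a set \<Rightarrow> (('v \<Rightarrow> 'a rel) \<Rightarrow> 'a set) \<Rightarrow> bool" where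
  "weakly_viable V A F \<longleftrightarrow> (\<forall>a\<in>A. \<exists>P. profile V A P \<and> a \<in> F P)"

definition reducible :: "'v set \<Rightarrow> 'a set \<Rightarrow> (('v \<Rightarrow> 'a rel) \<Rightarrow> 'a set) \<Rightarrow> bool" where
  "reducible V A F \<longleftrightarrow> (\<exists>B C (G :: ('v \<Rightarrow> 'a rel) \<Rightarrow> 'a) (H :: ('v \<Rightarrow> 'a rel) \<Rightarrow> 'a).
      B \<inter> C = {} \<and> B \<union> C = A \<and>
      (\<forall>Q. profile V B Q \<longrightarrow> G Q \<in> B) \<and>
      (\<forall>Q. profile V C Q \<longrightarrow> H Q \<in> C) \<and>
      (\<forall>P. profile V A P \<longrightarrow> F P = {G (restrict_profile P B), H (restrict_profile P C)}))"

definition range_edges :: "'v set \<Rightarrow> 'a set \<Rightarrow> (('v \<Rightarrow> 'a rel) \<Rightarrow> 'a set) \<Rightarrow> 'a set set" where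
  "range_edges V A F = {F P | P. profile V A P}"

definition complete_bipartite :: "'a set \<Rightarrow> 'a set set \<Rightarrow> bool" where
  "complete_bipartite A E \<longleftrightarrow> (\<exists>X Y. X \<inter> Y = {} \<and> X \<union> Y = A \<and> X \<noteq> {} \<and> Y \<noteq> {} \<and>
      E = {{x, y} | x y. x \<in> X \<and> y \<in> Y})"

end

theory Submission
  imports Defs
begin

lemma lin_join:
  assumes "linear_order_on B rb" "linear_order_on C rc" "B \<inter> C = {}"
  shows "linear_order_on (B \<union> C) (rb \<union> rc \<union> B \<times> C)"
proof -
  have b: "rb \<subseteq> B \<times> B" "\<forall>x\<in>B. (x,x)\<in>rb" "trans rb" "antisym rb" "total_on B rb"
    using assms(1) unfolding linear_order_on_def partial_order_on_def preorder_on_def refl_on_def by auto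
  have c: "rc \<subseteq> C \<times> C" "\<forall>x\<in>C. (x,x)\<in>rc" "trans rc" "antisym rc" "total_on C rc"
    using assms(2) unfolding linear_order_on_def partial_order_on_def preorder_on_def refl_on_def by auto
  let ?r = "rb \<union> rc \<union> B \<times> C"
  have t: "trans ?r"
  proof (rule transI)
    fix x y z assume xy: "(x,y) \<in> ?r" and yz: "(y,z) \<in> ?r"
    have xyB: "(x,y) \<in> rb \<Longrightarrow> x \<in> B \<and> y \<in> B" using b(1) by blast
    have xyC: "(x,y) \<in> rc \<Longrightarrow> x \<in> C \<and> y \<in> C" using c(1) by blast
    have yzB: "(y,z) \<in> rb \<Longrightarrow> y \<in> B \<and> z \<in> B" using b(1) by blast
    have yzC: "(y,z) \<in> rc \<Longrightarrow> y \<in> C \<and> z \<in> C" using c(1) by blast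
    have d: "y \<in> B \<Longrightarrow> y \<in> C \<Longrightarrow> False" using assms(3) by blast
    have tb: "(x,y) \<in> rb \<Longrightarrow> (y,z) \<in> rb \<Longrightarrow> (x,z) \<in> rb" using b(3) by (meson transD)
    have tc: "(x,y) \<in> rc \<Longrightarrow> (y,z) \<in> rc \<Longrightarrow> (x,z) \<in> rc" using c(3) by (meson transD)
    show "(x,z) \<in> ?r" using xy yz xyB xyC yzB yzC d tb tc by blast
  qed
  have a: "antisym ?r"
  proof (rule antisymI)
    fix x y assume xy: "(x,y) \<in> ?r" and yx: "(y,x) \<in> ?r"
    have xyB: "(x,y) \<in> rb \<Longrightarrow> x \<in> B \<and> y \<in> B" using b(1) by blast
    have xyC: "(x,y) \<in> rc \<Longrightarrow> x \<in> C \<and> y \<in> C" using c(1) by blast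
    have yxB: "(y,x) \<in> rb \<Longrightarrow> y \<in> B \<and> x \<in> B" using b(1) by blast
    have yxC: "(y,x) \<in> rc \<Longrightarrow> y \<in> C \<and> x \<in> C" using c(1) by blast
    have d: "\<And>u. u \<in> B \<Longrightarrow> u \<in> C \<Longrightarrow> False" using assms(3) by blast
    have ab: "(x,y) \<in> rb \<Longrightarrow> (y,x) \<in> rb \<Longrightarrow> x = y" using b(4) by (meson antisymD)
    have ac: "(x,y) \<in> rc \<Longrightarrow> (y,x) \<in> rc \<Longrightarrow> x = y" using c(4) by (meson antisymD)
    show "x = y" using xy yx xyB xyC yxB yxC d ab ac by blast
  qed
  have to: "total_on (B \<union> C) ?r"
  proof (rule total_onI)
    fix x y assume "x \<in> B \<union> C" "y \<in> B \<union> C" "x \<noteq> y"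
    then show "(x,y) \<in> ?r \<or> (y,x) \<in> ?r" using b(5) c(5) unfolding total_on_def by blast
  qed
  have s: "?r \<subseteq> (B \<union> C) \<times> (B \<union> C)" using b(1) c(1) by blast
  have rf: "refl_on (B \<union> C) ?r" unfolding refl_on_def using b(2) c(2) by blast
  show ?thesis unfolding linear_order_on_def partial_order_on_def preorder_on_def
    using t a to s rf by blast
qed
lemma lin_restr:
  assumes "linear_order_on A r" "B \<subseteq> A"
  shows "linear_order_on B (r \<inter> (B \<times> B))"
proof -
  have h: "r \<subseteq> A \<times> A" "\<forall>x\<in>A. (x,x)\<in>r" "trans r" "antisym r" "total_on A r"
    using assms(1) unfolding linear_order_on_def partial_order_on_def preorder_on_def refl_on_def by auto
  have "trans (r \<inter> (B \<times> B))" using h(3) by (rule trans_Restr)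
  moreover have "antisym (r \<inter> (B \<times> B))" using h(4) antisym_subset by blast
  moreover have "total_on B (r \<inter> (B \<times> B))" using h(5) assms(2) unfolding total_on_def by blast
  moreover have "refl_on B (r \<inter> (B \<times> B))" using h(2) assms(2) unfolding refl_on_def by blast
  ultimately show ?thesis unfolding linear_order_on_def partial_order_on_def preorder_on_def by blast
qed

lemma prof_restr:
  assumes "profile V A P" "B \<subseteq> A"
  shows "profile V B (restrict_profile P B)"
  using assms unfolding profile_def restrict_profile_def by (auto intro: lin_restr)

lemma restrB: "B \<inter> C = {} \<Longrightarrow> (X \<inter> (B \<times> B) \<union> Y \<inter> (C \<times> C) \<union> B \<times> C) \<inter> (B \<times> B) = X \<inter> (B \<times> B)"
  by blast

lemma restrC: "B \<inter> C = {} \<Longrightarrow> (X \<inter> (B \<times> B) \<union> Y \<inter> (C \<times> C) \<union> B \<times> C) \<inter> (C \<times> C) = Y \<inter> (C \<times> C)"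
  by blast

theorem fact29:
  fixes V :: "'v set" and A :: "'a set" and F :: "('v \<Rightarrow> 'a rel) \<Rightarrow> 'a set"
  assumes "finite V" and "V \<noteq> {}" and "finite A"
    and "consular_rule V A F"
    and "weakly_viable V A F"
    and "reducible V A F"
    and "SPP V A F"
    and "SPO V A F"
  shows "complete_bipartite A (range_edges V A F)"
proof -
  obtain B C G H where BC: "B \<inter> C = {}" "B \<union> C = A"
    and G: "\<And>Q. profile V B Q \<Longrightarrow> (G :: ('v \<Rightarrow> 'a rel) \<Rightarrow> 'a) Q \<in> B"
    and H: "\<And>Q. profile V C Q \<Longrightarrow> (H :: ('v \<Rightarrow> 'a rel) \<Rightarrow> 'a) Q \<in> C"
    and FP: "\<And>P. profile V A P \<Longrightarrow> F P = {G (restrict_profile P B), H (restrict_profile P C)}"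
    using assms(6) unfolding reducible_def by blast
  have sB: "B \<subseteq> A" and sC: "C \<subseteq> A" using BC by auto
  obtain r0 :: "'a rel" where r0: "well_order_on A r0" using well_order_on by blast
  define P0 where "P0 = (\<lambda>i. if i \<in> V then r0 else {})"
  have P0: "profile V A P0" using r0 unfolding P0_def profile_def well_order_on_def by auto
  have Bne: "B \<noteq> {}" using G[OF prof_restr[OF P0 sB]] by auto
  have Cne: "C \<noteq> {}" using H[OF prof_restr[OF P0 sC]] by auto
  have Gb: "\<exists>P. profile V A P \<and> G (restrict_profile P B) = b" if "b \<in> B" for b
  proof -
    have "b \<in> A" using that sB by blast
    then obtain P where P: "profile V A P" "b \<in> F P" using assms(5) unfolding weakly_viable_def by blast
    have "H (restrict_profile P C) \<in> C" using H[OF prof_restr[OF P(1) sC]] .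
    moreover have "b \<in> {G (restrict_profile P B), H (restrict_profile P C)}" using P FP[OF P(1)] by simp
    ultimately have "G (restrict_profile P B) = b" using BC(1) that by blast
    then show ?thesis using P(1) by blast
  qed
  have Hc: "\<exists>P. profile V A P \<and> H (restrict_profile P C) = c" if "c \<in> C" for c
  proof -
    have "c \<in> A" using that sC by blast
    then obtain P where P: "profile V A P" "c \<in> F P" using assms(5) unfolding weakly_viable_def by blast
    have "G (restrict_profile P B) \<in> B" using G[OF prof_restr[OF P(1) sB]] .
    moreover have "c \<in> {G (restrict_profile P B), H (restrict_profile P C)}" using P FP[OF P(1)] by simp
    ultimately have "H (restrict_profile P C) = c" using BC(1) that by blast
    then show ?thesis using P(1) by blast
  qed
  have sup: "{x, y} \<in> range_edges V A F" if xy: "x \<in> B" "y \<in> C" for x y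
  proof -
    obtain Pb where Pb: "profile V A Pb" "G (restrict_profile Pb B) = x" using Gb[OF xy(1)] by blast
    obtain Pc where Pc: "profile V A Pc" "H (restrict_profile Pc C) = y" using Hc[OF xy(2)] by blast
    define P where "P = (\<lambda>i. if i \<in> V then Pb i \<inter> (B \<times> B) \<union> Pc i \<inter> (C \<times> C) \<union> B \<times> C else {})"
    have PA: "profile V A P"
      unfolding profile_def
    proof (intro conjI ballI allI impI)
      fix i assume i: "i \<in> V"
      have "linear_order_on B (Pb i \<inter> (B \<times> B))" using Pb(1) i sB lin_restr unfolding profile_def by blast
      moreover have "linear_order_on C (Pc i \<inter> (C \<times> C))" using Pc(1) i sC lin_restr unfolding profile_def by blast
      ultimately have "linear_order_on (B \<union> C) (Pb i \<inter> (B \<times> B) \<union> Pc i \<inter> (C \<times> C) \<union> B \<times> C)"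
        by (rule lin_join[OF _ _ BC(1)])
      then show "linear_order_on A (P i)" unfolding P_def using BC(2) i by simp
    next
      fix i assume "i \<notin> V" then show "P i = {}" unfolding P_def by simp
    qed
    have rB: "restrict_profile P B = restrict_profile Pb B"
    proof
      fix i show "restrict_profile P B i = restrict_profile Pb B i"
      proof (cases "i \<in> V")
        case True then show ?thesis unfolding restrict_profile_def P_def using restrB[OF BC(1)] by simp
      next
        case False then show ?thesis using Pb(1) unfolding restrict_profile_def P_def profile_def by simp
      qed
    qed
    have rC: "restrict_profile P C = restrict_profile Pc C"
    proof
      fix i show "restrict_profile P C i = restrict_profile Pc C i"
      proof (cases "i \<in> V")
        case True then show ?thesis unfolding restrict_profile_def P_def using restrC[OF BC(1)] by simp
      next
        case False then show ?thesis using Pc(1) unfolding restrict_profile_def P_def profile_def by simp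
      qed
    qed
    have "F P = {x, y}" using FP[OF PA] rB rC Pb(2) Pc(2) by simp
    then show ?thesis using PA unfolding range_edges_def by blast
  qed
  have eq: "range_edges V A F = {{x, y} | x y. x \<in> B \<and> y \<in> C}"
  proof
    show "range_edges V A F \<subseteq> {{x, y} | x y. x \<in> B \<and> y \<in> C}"
    proof
      fix e assume "e \<in> range_edges V A F"
      then obtain P where P: "profile V A P" "e = F P" unfolding range_edges_def by blast
      show "e \<in> {{x, y} | x y. x \<in> B \<and> y \<in> C}"
        using P FP[OF P(1)] G[OF prof_restr[OF P(1) sB]] H[OF prof_restr[OF P(1) sC]] by blast
    qed
    show "{{x, y} | x y. x \<in> B \<and> y \<in> C} \<subseteq> range_edges V A F" using sup by blast
  qed
  show ?thesis unfolding complete_bipartite_def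
    apply (rule exI[of _ B], rule exI[of _ C])
    using BC Bne Cne eq by (intro conjI)
qed

end
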